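(* Let $\mathbf L$ be an algebraic lattice with an equa-interior operator $\eta$, and let $x,z,a$ be coatoms of $\mathbf L$ with $x\wedge z\le a$ properly. Then $\eta(a)\le x\wedge z$, and consequently (1) $\tau(x\wedge z)=a$, (2) $\eta(x)\not\le a$, and (3) $\eta(x)\not\le z$.
   Context: An equa-interior operator on an algebraic lattice $\mathbf L$ is a map $\eta:L\to L$ such that for all $x,y,z\in L$: (I1) $\eta(x)\le x$; (I2) $x\ge y$ implies $\eta(x)\ge\eta(y)$; (I3) $\eta^2(x)=\eta(x)$; (I4) $\eta(1)=1$; (I5) if $\eta(x)=u$ for all $x\in X\subseteq L$ then $\eta(\bigvee X)=u$; (I6) $\eta(x)\vee(y\wedge z)=(\eta(x)\vee y)\wedge(\eta(x)\vee z)$; (I7) the image $\eta(L)$ is the complete join subsemilattice of $L$ generated by the elements of $\eta(L)$ that are compact in $\mathbf L$; (I8) there is a compact element $w\in L$ with $\eta(w)=w$ such that the interval $[w,1]$ is isomorphic to the congruence lattice of a join semilattice with $0$. Define $\tau(y)=\bigvee\{u\in L:\eta(u)=\eta(y)\}$. For coatoms, "$x\wedge z\le a$ properly" means $x\wedge z\le a$ while $x\not\le a$ and $z\not\le a$. *)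

theory Defs
  imports Main
begin

definition compact_el :: "'a::complete_lattice \<Rightarrow> bool" where
  "compact_el c \<longleftrightarrow> (\<forall>A. c \<le> Sup A \<longrightarrow> (\<exists>F. finite F \<and> F \<subseteq> A \<and> c \<le> Sup F))"

definition algebraic_lattice :: "'a::complete_lattice itself \<Rightarrow> bool" where
  "algebraic_lattice _ \<longleftrightarrow> (\<forall>x::'a. x = Sup {c. compact_el c \<and> c \<le> x})"

definition coatom :: "'a::complete_lattice \<Rightarrow> bool" where
  "coatom a \<longleftrightarrow> a \<noteq> top \<and> (\<forall>y. a \<le> y \<longrightarrow> y = a \<or> y = top)"

definition join_semilattice0 :: "'b set \<Rightarrow> ('b \<Rightarrow> 'b \<Rightarrow> 'b) \<Rightarrow> 'b \<Rightarrow> bool" where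
  "join_semilattice0 S j e \<longleftrightarrow>
     e \<in> S \<and> (\<forall>x\<in>S. \<forall>y\<in>S. j x y \<in> S) \<and>
     (\<forall>x\<in>S. \<forall>y\<in>S. \<forall>z\<in>S. j (j x y) z = j x (j y z)) \<and>
     (\<forall>x\<in>S. \<forall>y\<in>S. j x y = j y x) \<and>
     (\<forall>x\<in>S. j x x = x) \<and>
     (\<forall>x\<in>S. j e x = x)"

definition sl_congruences :: "'b set \<Rightarrow> ('b \<Rightarrow> 'b \<Rightarrow> 'b) \<Rightarrow> ('b \<times> 'b) set set" where
  "sl_congruences S j = {\<theta>. equiv S \<theta> \<and>
     (\<forall>a b c d. (a, b) \<in> \<theta> \<longrightarrow> (c, d) \<in> \<theta> \<longrightarrow> (j a c, j b d) \<in> \<theta>)}"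

definition equa_interior :: "('a::complete_lattice \<Rightarrow> 'a) \<Rightarrow> 'b itself \<Rightarrow> bool" where
  "equa_interior \<eta> _ \<longleftrightarrow>
     (\<forall>x. \<eta> x \<le> x) \<and>
     (\<forall>x y. y \<le> x \<longrightarrow> \<eta> y \<le> \<eta> x) \<and>
     (\<forall>x. \<eta> (\<eta> x) = \<eta> x) \<and>
     \<eta> top = top \<and>
     (\<forall>X u. X \<noteq> {} \<longrightarrow> (\<forall>x\<in>X. \<eta> x = u) \<longrightarrow> \<eta> (Sup X) = u) \<and>
     (\<forall>x y z. sup (\<eta> x) (inf y z) = inf (sup (\<eta> x) y) (sup (\<eta> x) z)) \<and>
     range \<eta> = {Sup A | A. A \<subseteq> range \<eta> \<inter> {c. compact_el c}} \<and>
     (\<exists>w. compact_el w \<and> \<eta> w = w \<and>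
        (\<exists>(S::'b set) j e f. join_semilattice0 S j e \<and>
           bij_betw f {y. w \<le> y} (sl_congruences S j) \<and>
           (\<forall>y1\<in>{y. w \<le> y}. \<forall>y2\<in>{y. w \<le> y}. y1 \<le> y2 \<longleftrightarrow> f y1 \<subseteq> f y2)))"

definition tau :: "('a::complete_lattice \<Rightarrow> 'a) \<Rightarrow> 'a \<Rightarrow> 'a" where
  "tau \<eta> y = Sup {u. \<eta> u = \<eta> y}"

end

theory Submission
  imports Defs
begin

theorem lemma7p4:
  fixes \<eta> :: "'a::complete_lattice \<Rightarrow> 'a" and x z a :: 'a
  assumes "algebraic_lattice TYPE('a)"
    and "equa_interior \<eta> TYPE('b)"
    and "coatom x" and "coatom z" and "coatom a"
    and "inf x z \<le> a" and "\<not> x \<le> a" and "\<not> z \<le> a"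
  shows "\<eta> a \<le> inf x z \<and> tau \<eta> (inf x z) = a \<and> \<not> \<eta> x \<le> a \<and> \<not> \<eta> x \<le> z"
proof -
  note E = assms(2)[unfolded equa_interior_def]
  have I1: "\<And>x. \<eta> x \<le> x" using E[THEN conjunct1] by blast
  have I2: "\<And>x y. y \<le> x \<Longrightarrow> \<eta> y \<le> \<eta> x" using E[THEN conjunct2, THEN conjunct1] by blast
  have I3: "\<And>x. \<eta> (\<eta> x) = \<eta> x" using E[THEN conjunct2, THEN conjunct2, THEN conjunct1] by blast
  have I4: "\<eta> top = top" using E[THEN conjunct2, THEN conjunct2, THEN conjunct2, THEN conjunct1] .
  have I5: "\<And>X u. X \<noteq> {} \<Longrightarrow> (\<forall>x\<in>X. \<eta> x = u) \<Longrightarrow> \<eta> (Sup X) = u"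
    using E[THEN conjunct2, THEN conjunct2, THEN conjunct2, THEN conjunct2, THEN conjunct1] by blast
  have I6: "\<And>x y z. sup (\<eta> x) (inf y z) = inf (sup (\<eta> x) y) (sup (\<eta> x) z)"
    using E[THEN conjunct2, THEN conjunct2, THEN conjunct2, THEN conjunct2, THEN conjunct2, THEN conjunct1] by blast
  have cx: "\<And>y. x \<le> y \<Longrightarrow> y = x \<or> y = top" and xt: "x \<noteq> top"
    using assms(3) unfolding coatom_def by auto
  have cz: "\<And>y. z \<le> y \<Longrightarrow> y = z \<or> y = top" and zt: "z \<noteq> top"
    using assms(4) unfolding coatom_def by auto
  have ca: "\<And>y. a \<le> y \<Longrightarrow> y = a \<or> y = top" and at: "a \<noteq> top"
    using assms(5) unfolding coatom_def by auto
  have key: "sup (\<eta> a) (inf x z) \<le> a"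
    using I1[of a] assms(6) by simp
  have ex: "\<eta> a \<le> x"
  proof (rule ccontr)
    assume n: "\<not> \<eta> a \<le> x"
    have "sup (\<eta> a) x = x \<or> sup (\<eta> a) x = top" using cx[of "sup (\<eta> a) x"] by simp
    hence "sup (\<eta> a) x = top" using n by (auto simp: le_iff_sup)
    hence "sup (\<eta> a) (inf x z) = sup (\<eta> a) z" using I6[of a x z] by simp
    hence "z \<le> a" using key order.trans[OF sup_ge2[of z "\<eta> a"]] by simp
    with assms(8) show False by simp
  qed
  have ez: "\<eta> a \<le> z"
  proof (rule ccontr)
    assume n: "\<not> \<eta> a \<le> z"
    have "sup (\<eta> a) z = z \<or> sup (\<eta> a) z = top" using cz[of "sup (\<eta> a) z"] by simp
    hence "sup (\<eta> a) z = top" using n by (auto simp: le_iff_sup)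
    hence "sup (\<eta> a) (inf x z) = sup (\<eta> a) x" using I6[of a x z] by simp
    hence "x \<le> a" using key order.trans[OF sup_ge2[of x "\<eta> a"]] by simp
    with assms(7) show False by simp
  qed
  have P1: "\<eta> a \<le> inf x z" using ex ez by simp
  have eq: "\<eta> (inf x z) = \<eta> a"
    using I2[OF P1] I3[of a] I2[OF assms(6)] by (simp add: order.antisym)
  let ?X = "{u. \<eta> u = \<eta> (inf x z)}"
  have aX: "a \<in> ?X" using eq by simp
  have le: "a \<le> tau \<eta> (inf x z)" unfolding tau_def using aX by (rule Sup_upper)
  have ne: "tau \<eta> (inf x z) \<noteq> top"
  proof
    assume t: "tau \<eta> (inf x z) = top"
    have "\<eta> (Sup ?X) = \<eta> (inf x z)" using aX by (intro I5) auto
    hence "top = \<eta> a" using t I4 eq unfolding tau_def by simp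
    thus False using I1[of a] at by (simp add: top_le)
  qed
  have P2: "tau \<eta> (inf x z) = a" using ca[OF le] ne by blast
  have P3: "\<not> \<eta> x \<le> a"
  proof
    assume h: "\<eta> x \<le> a"
    have "\<eta> a \<le> \<eta> x" using I2[OF order.trans[OF P1 inf.cobounded1]] I3[of a] by simp
    moreover have "\<eta> x \<le> \<eta> a" using I2[OF h] I3[of x] by simp
    ultimately have exa: "\<eta> x = \<eta> a" by simp
    have "\<eta> (Sup {x, a}) = \<eta> a" using exa by (intro I5) auto
    moreover have "sup x a = a \<or> sup x a = top" using ca[of "sup x a"] by simp
    hence "sup x a = top" using assms(7) by (auto simp: le_iff_sup)
    ultimately have "\<eta> a = top" using I4 by simp
    thus False using I1[of a] at by (simp add: top_le)
  qed
  have P4: "\<not> \<eta> x \<le> z"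
  proof
    assume "\<eta> x \<le> z"
    hence "\<eta> x \<le> inf x z" using I1[of x] by simp
    with assms(6) P3 show False using order.trans by blast
  qed
  show ?thesis using P1 P2 P3 P4 by blast
qed

end
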